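(* Let $m\in\{1,2,3\}$, $H=L^2([0,2\pi]^m)$, $\Delta$ the realization of the Laplacian with periodic boundary conditions in $H$, with orthonormal eigenbasis $\{e_k\}$, $\Delta e_k=-\lambda_ke_k$, $\lambda_k\approx k^{2/m}$, and let $\beta,\gamma\ge0$, $\theta\in(0,1)$. Set $Q_t=\frac12(-\Delta)^{-(\beta+\gamma)}(I-e^{-2t(-\Delta)^\beta})$, $P_n$ the orthogonal projection onto $H_n=\mathrm{span}\{e_1,\dots,e_n\}$. Then: (1) if $(m-2\gamma)/(2\beta)<1$, there exists $\eta>0$ such that $\int_0^ts^{-\eta}\mathrm{Trace}_H[e^{-2s(-\Delta)^\beta}(-\Delta)^{-\gamma}]ds<+\infty$ for every $t>0$; (2) there exists $c>0$ such that for every $n\in\mathbb N$ and $t>0$, $\Gamma_{t,n}:=\|P_nQ_t^{-1/2}e^{-t(-\Delta)^\beta}P_n\|_{\mathcal L(H)}\le\Gamma_t:=\|Q_t^{-1/2}e^{-t(-\Delta)^\beta}\|_{\mathcal L(H)}\le c\,t^{-1/2-\gamma/(2\beta)}$; (3) if $(m-2\beta)/2<\gamma<\beta\theta/(2-\theta)$, then, for $A=-(-\Delta)^\beta$, $U=H$, $G=(-\Delta)^{-\gamma/2}$, any bounded $\theta$-Hölder $B:H\to H$ and the subspaces $H_n$, the following hold: there is $\eta\in(0,1)$ with $\int_0^ts^{-\eta}\mathrm{Trace}_H[e^{sA}GG^*e^{sA^*}]ds<\infty$ for all $t>0$; $H_n\subseteq D(A)$, $H_n\subseteq H_{n+1}$,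 $\bigcup H_n$ dense, $A(H_{n+1}\setminus H_n)\subseteq(H_{n+1}\setminus H_n)\cup\{0\}$; with $A_n=AP_n$, $G_n=P_nG$, $Q_{t,n}=\int_0^te^{sA_n}G_nG_n^*e^{sA_n^*}ds$ has trivial kernel for all $t>0,n$; and $\sup_n\int_0^t\|Q_{s,n}^{-1/2}e^{sA_n}\|^{2-\theta}_{\mathcal L(H)}ds<\infty$ for all $t>0$.
   Context: $A=-(-\Delta)^\beta$ generates an analytic semigroup $e^{-t(-\Delta)^\beta}$ on $H$; note $Q_{t,n}=P_nQ_tP_n$. *)

theory Defs
  imports "HOL-Analysis.Analysis"
begin

text \<open>The Hilbert space H is represented through the orthonormal eigenbasis (e_k) of the
  Laplacian: an element of H is identified with its coefficient sequence
  (0-indexed: e_0, e_1, ...), i.e. H is identified with l^2(nat).  All operators of the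
  statement are diagonal in this basis and are written via their symbols.\<close>

type_synonym seq = "nat \<Rightarrow> real"

definition ell2 :: "seq set" where
  "ell2 = {x. summable (\<lambda>k. (x k)\<^sup>2)}"

definition l2norm :: "seq \<Rightarrow> real" where
  "l2norm x = sqrt (\<Sum>k. (x k)\<^sup>2)"

definition l2normE :: "seq \<Rightarrow> ennreal" where
  "l2normE x = (if x \<in> ell2 then ennreal (l2norm x) else top)"

definition opnorm :: "(seq \<Rightarrow> seq) \<Rightarrow> ennreal" where
  "opnorm T = (SUP x\<in>{x\<in>ell2. l2norm x \<le> 1}. l2normE (T x))"

definition unitvec :: "nat \<Rightarrow> seq" where
  "unitvec k = (\<lambda>j. if j = k then 1 else 0)"

definition traceE :: "(seq \<Rightarrow> seq) \<Rightarrow> ennreal" where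
  "traceE T = (\<Sum>k. ennreal (T (unitvec k) k))"

definition diag :: "seq \<Rightarrow> seq \<Rightarrow> seq" where
  "diag d x = (\<lambda>k. d k * x k)"

definition proj :: "nat \<Rightarrow> seq \<Rightarrow> seq" where
  "proj n x = (\<lambda>k. if k < n then x k else 0)"

definition Hn :: "nat \<Rightarrow> seq set" where
  "Hn n = {x \<in> ell2. \<forall>k\<ge>n. x k = 0}"

text \<open>(-Delta)^a, with Delta e_k = - lam k e_k.\<close>
definition negLapPow :: "seq \<Rightarrow> real \<Rightarrow> seq \<Rightarrow> seq" where
  "negLapPow lam a = diag (\<lambda>k. lam k powr a)"

definition opA :: "seq \<Rightarrow> real \<Rightarrow> seq \<Rightarrow> seq" where
  "opA lam \<beta> = diag (\<lambda>k. - (lam k powr \<beta>))"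

definition domA :: "seq \<Rightarrow> real \<Rightarrow> seq set" where
  "domA lam \<beta> = {x \<in> ell2. opA lam \<beta> x \<in> ell2}"

definition semigrp :: "seq \<Rightarrow> real \<Rightarrow> real \<Rightarrow> seq \<Rightarrow> seq" where
  "semigrp lam \<beta> s = diag (\<lambda>k. exp (- s * lam k powr \<beta>))"

definition Qsymb :: "seq \<Rightarrow> real \<Rightarrow> real \<Rightarrow> real \<Rightarrow> seq" where
  "Qsymb lam \<beta> \<gamma> t = (\<lambda>k. 1/2 * lam k powr (-(\<beta>+\<gamma>)) * (1 - exp (-2 * t * lam k powr \<beta>)))"

definition Qt :: "seq \<Rightarrow> real \<Rightarrow> real \<Rightarrow> real \<Rightarrow> seq \<Rightarrow> seq" where
  "Qt lam \<beta> \<gamma> t = diag (Qsymb lam \<beta> \<gamma> t)"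

definition Qt_invsqrt :: "seq \<Rightarrow> real \<Rightarrow> real \<Rightarrow> real \<Rightarrow> seq \<Rightarrow> seq" where
  "Qt_invsqrt lam \<beta> \<gamma> t = diag (\<lambda>k. Qsymb lam \<beta> \<gamma> t k powr (-1/2))"

text \<open>e^{sA_n} for A_n = A P_n (A_n vanishes on the complement of H_n).\<close>
definition semigrp_n :: "seq \<Rightarrow> real \<Rightarrow> nat \<Rightarrow> real \<Rightarrow> seq \<Rightarrow> seq" where
  "semigrp_n lam \<beta> n s = diag (\<lambda>k. if k < n then exp (- s * lam k powr \<beta>) else 1)"

definition opG :: "seq \<Rightarrow> real \<Rightarrow> seq \<Rightarrow> seq" where
  "opG lam \<gamma> = negLapPow lam (-\<gamma>/2)"

definition opGn :: "seq \<Rightarrow> real \<Rightarrow> nat \<Rightarrow> seq \<Rightarrow> seq" where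
  "opGn lam \<gamma> n = proj n \<circ> opG lam \<gamma>"

definition opGn_adj :: "seq \<Rightarrow> real \<Rightarrow> nat \<Rightarrow> seq \<Rightarrow> seq" where
  "opGn_adj lam \<gamma> n = opG lam \<gamma> \<circ> proj n"

text \<open>Q_{t,n} = int_0^t e^{sA_n} G_n G_n^* e^{sA_n^*} ds (weak/coordinatewise integral;
  e^{sA_n} is self-adjoint).\<close>
definition Qtn :: "seq \<Rightarrow> real \<Rightarrow> real \<Rightarrow> nat \<Rightarrow> real \<Rightarrow> seq \<Rightarrow> seq" where
  "Qtn lam \<beta> \<gamma> n t x = (\<lambda>k. integral {0..t}
     (\<lambda>s. (semigrp_n lam \<beta> n s \<circ> opGn lam \<gamma> n \<circ> opGn_adj lam \<gamma> n \<circ> semigrp_n lam \<beta> n s) x k))"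

text \<open>Q_{t,n}^{-1/2}, understood as the inverse square root of Q_{t,n} on H_n
  (Q_{t,n} is diagonal), extended by 0 on the orthogonal complement of H_n.\<close>
definition Qtn_invsqrt :: "seq \<Rightarrow> real \<Rightarrow> real \<Rightarrow> nat \<Rightarrow> real \<Rightarrow> seq \<Rightarrow> seq" where
  "Qtn_invsqrt lam \<beta> \<gamma> n t =
     diag (\<lambda>k. if k < n then (Qtn lam \<beta> \<gamma> n t (unitvec k) k) powr (-1/2) else 0)"

definition ennpowr :: "ennreal \<Rightarrow> real \<Rightarrow> ennreal" where
  "ennpowr x p = (if x = top then top else ennreal (enn2real x powr p))"

end

theory Submission
  imports Defs
begin


lemma powr_int_finite:
  assumes "q < 1" "t > 0" "C \<ge> 0"
  shows "(\<integral>\<^sup>+ s\<in>{0<..t}. ennreal (C * s powr (-q)) \<partial>lborel) < \<infinity>"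
proof -
  have hi0: "((\<lambda>x. x powr (-q)) has_integral (t powr (-q+1) / (-q+1))) {0..t}"
    using has_integral_powr_from_0[of "-q" t] assms by simp
  have hi: "((\<lambda>x. C * x powr (-q)) has_integral (C * (t powr (-q+1) / (-q+1)))) {0..t}"
    using has_integral_mult_right[OF hi0] by simp
  have eq: "(\<integral>\<^sup>+ s. ennreal (C * s powr (-q)) * indicator {0..t} s \<partial>lborel) = ennreal (C * (t powr (-q+1) / (-q+1)))"
    by (rule nn_integral_has_integral_lebesgue'[OF _ hi]) (simp add: assms)
  have "(\<integral>\<^sup>+ s\<in>{0<..t}. ennreal (C * s powr (-q)) \<partial>lborel) \<le> (\<integral>\<^sup>+ s. ennreal (C * s powr (-q)) * indicator {0..t} s \<partial>lborel)"
    by (intro nn_integral_mono) (auto simp: indicator_def)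
  then show ?thesis using eq by (simp add: top.not_eq_extremum le_less_trans) 
qed



lemma diag_comp: "diag a \<circ> diag b = diag (\<lambda>k. a k * b k)"
  by (auto simp: diag_def fun_eq_iff)



lemma proj_diag: "proj n = diag (\<lambda>k. if k < n then 1 else 0)"
  by (auto simp: proj_def diag_def fun_eq_iff)



lemma opnorm_diag_le:
  assumes "M \<ge> 0" "\<And>k. \<bar>d k\<bar> \<le> M"
  shows "opnorm (diag d) \<le> ennreal M"
  unfolding opnorm_def
proof (rule SUP_least)
  fix x assume x: "x \<in> {x \<in> ell2. l2norm x \<le> 1}"
  have sx: "summable (\<lambda>k. (x k)\<^sup>2)" using x by (auto simp: ell2_def)
  have le: "(d k * x k)\<^sup>2 \<le> M\<^sup>2 * (x k)\<^sup>2" for k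
  proof -
    have "(d k * x k)\<^sup>2 = (d k)\<^sup>2 * (x k)\<^sup>2" by (simp add: power_mult_distrib)
    also have "(d k)\<^sup>2 \<le> M\<^sup>2"
      using assms(2)[of k] abs_le_square_iff by (metis abs_of_nonneg assms(1))
    then have "(d k)\<^sup>2 * (x k)\<^sup>2 \<le> M\<^sup>2 * (x k)\<^sup>2"
      by (rule mult_right_mono) simp
    finally show ?thesis .
  qed
  have s2: "summable (\<lambda>k. (d k * x k)\<^sup>2)"
    by (rule summable_comparison_test[of _ "\<lambda>k. M\<^sup>2 * (x k)\<^sup>2"]) (use le sx summable_mult in auto)
  have "(\<Sum>k. (d k * x k)\<^sup>2) \<le> (\<Sum>k. M\<^sup>2 * (x k)\<^sup>2)"
    by (rule suminf_le) (use le s2 sx summable_mult in auto)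
  also have "\<dots> = M\<^sup>2 * (\<Sum>k. (x k)\<^sup>2)" using sx by (simp add: suminf_mult)
  also have "\<dots> \<le> M\<^sup>2 * 1"
  proof -
    have "(\<Sum>k. (x k)\<^sup>2) \<ge> 0" using sx by (simp add: suminf_nonneg)
    moreover have "sqrt (\<Sum>k. (x k)\<^sup>2) \<le> 1" using x by (simp add: l2norm_def)
    ultimately have "(\<Sum>k. (x k)\<^sup>2) \<le> 1" by simp
    then show ?thesis by (intro mult_left_mono) auto
  qed
  finally have s: "(\<Sum>k. (d k * x k)\<^sup>2) \<le> M\<^sup>2" by simp
  have "sqrt (\<Sum>k. (d k * x k)\<^sup>2) \<le> sqrt (M\<^sup>2)" using s by (rule real_sqrt_le_mono)
  then have "sqrt (\<Sum>k. (d k * x k)\<^sup>2) \<le> M" using assms(1) by simp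
  then show "l2normE (diag d x) \<le> ennreal M"
    using s2 by (auto simp: l2normE_def ell2_def diag_def l2norm_def intro!: ennreal_leI)
qed


lemma opnorm_proj_le: "opnorm (proj n \<circ> T \<circ> proj n) \<le> opnorm T"
  unfolding opnorm_def
proof (rule SUP_least)
  fix x assume x: "x \<in> {x \<in> ell2. l2norm x \<le> 1}"
  let ?y = "proj n x"
  have sx: "summable (\<lambda>k. (x k)\<^sup>2)" using x by (auto simp: ell2_def)
  have sy: "summable (\<lambda>k. (?y k)\<^sup>2)"
    by (rule summable_comparison_test[OF _ sx]) (auto simp: proj_def)
  have "(\<Sum>k. (?y k)\<^sup>2) \<le> (\<Sum>k. (x k)\<^sup>2)"
    by (rule suminf_le[OF _ sy sx]) (auto simp: proj_def)
  then have "l2norm ?y \<le> 1" using x by (auto simp: l2norm_def intro: order_trans)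
  then have yin: "?y \<in> {x \<in> ell2. l2norm x \<le> 1}" using sy by (simp add: ell2_def)
  have "l2normE (proj n (T ?y)) \<le> l2normE (T ?y)"
  proof (cases "T ?y \<in> ell2")
    case True
    let ?z = "T ?y"
    have sz: "summable (\<lambda>k. (?z k)\<^sup>2)" using True by (auto simp: ell2_def)
    have sp: "summable (\<lambda>k. (proj n ?z k)\<^sup>2)"
      by (rule summable_comparison_test[OF _ sz]) (auto simp: proj_def)
    have "(\<Sum>k. (proj n ?z k)\<^sup>2) \<le> (\<Sum>k. (?z k)\<^sup>2)"
      by (rule suminf_le[OF _ sp sz]) (auto simp: proj_def)
    then show ?thesis using True sp by (auto simp: l2normE_def ell2_def l2norm_def intro!: ennreal_leI)
  qed (simp add: l2normE_def)
  also have "\<dots> \<le> (SUP x\<in>{x\<in>ell2. l2norm x \<le> 1}. l2normE (T x))"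
    using yin by (rule SUP_upper)
  finally show "l2normE ((proj n \<circ> T \<circ> proj n) x) \<le> (SUP x\<in>{x\<in>ell2. l2norm x \<le> 1}. l2normE (T x))"
    by simp
qed




lemma exp_neg_le_powr:
  fixes y p :: real
  assumes "y > 0" "0 \<le> p" "p \<le> 1"
  shows "exp (-y) \<le> y powr (-p)"
proof -
  have "y powr p \<le> exp y"
  proof (cases "y \<le> 1")
    case True
    then have "y powr p \<le> 1" using powr_mono2[of p y 1] assms True by simp
    then show ?thesis by (smt (verit) one_le_exp_iff assms(1))
  next
    case False
    then have "y powr p \<le> y powr 1" using assms by (intro powr_mono) auto
    then show ?thesis using assms(1) by (smt (verit) exp_ge_add_one_self powr_one)
  qed
  then have "inverse (exp y) \<le> inverse (y powr p)"
    using assms(1) by (intro le_imp_inverse_le) auto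
  then show ?thesis by (simp add: powr_minus exp_minus)
qed



lemma xb_bound:
  fixes x b :: real
  assumes "x > 0" "b \<ge> 1"
  shows "x powr b \<le> max (1/2) (2 * (2*b) powr b) * (exp (2*x) - 1)"
proof -
  have e1: "exp (2*x) - 1 \<ge> 2*x" using exp_ge_add_one_self[of "2*x"] by linarith
  show ?thesis
  proof (cases "x \<le> 1")
    case True
    have "x powr b \<le> x powr 1" using True assms by (intro powr_mono') auto
    then have "x powr b \<le> (1/2) * (exp (2*x) - 1)" using e1 assms by simp
    also have "\<dots> \<le> max (1/2) (2 * (2*b) powr b) * (exp (2*x) - 1)"
      using e1 assms by (intro mult_right_mono) auto
    finally show ?thesis .
  next
    case False
    have "ln (x/(2*b)) \<le> x/(2*b) - 1" using assms by (intro ln_le_minus_one) auto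
    then have "ln x - ln (2*b) \<le> x/(2*b) - 1" using assms by (simp add: ln_div)
    then have "b * ln x \<le> b * (x/(2*b) + ln (2*b))" using assms by (intro mult_left_mono) auto
    also have "\<dots> = x/2 + b * ln (2*b)" using assms by (simp add: field_simps)
    finally have bl: "b * ln x \<le> x/2 + b * ln (2*b)" .
    have "x powr b = exp (b * ln x)" using assms by (simp add: powr_def)
    also have "\<dots> \<le> exp (x/2 + b * ln (2*b))" using bl by simp
    also have "\<dots> = exp (x/2) * (2*b) powr b" using assms by (simp add: exp_add powr_def)
    also have "\<dots> \<le> (2 * (exp (2*x) - 1)) * (2*b) powr b"
    proof (intro mult_right_mono)
      have "exp (x/2) \<le> exp (2*x)" using assms by simp
      moreover have "exp (2*x) \<ge> 2" using e1 False by simp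
      moreover have "2 * (exp (2*x) - 1) = 2 * exp (2*x) - 2" by simp
      ultimately show "exp (x/2) \<le> 2 * (exp (2*x) - 1)" by linarith
    qed simp
    also have "\<dots> = (2 * (2*b) powr b) * (exp (2*x) - 1)" by simp
    also have "\<dots> \<le> max (1/2) (2 * (2*b) powr b) * (exp (2*x) - 1)"
      using e1 assms by (intro mult_right_mono) auto
    finally show ?thesis .
  qed
qed






lemma sym_bound:
  fixes \<beta> \<gamma> l t :: real
  assumes b0: "\<beta> > 0" and g0: "\<gamma> \<ge> 0" and l0: "l > 0" and t0: "t > 0"
  defines "b \<equiv> 1 + \<gamma>/\<beta>"
  defines "K \<equiv> max (1/2) (2 * (2*b) powr b)"
  shows "\<bar>(1/2 * l powr (-(\<beta>+\<gamma>)) * (1 - exp (-2*t*l powr \<beta>))) powr (-1/2) * exp (- t * l powr \<beta>)\<bar>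
           \<le> sqrt (2*K) * t powr (-1/2 - \<gamma>/(2*\<beta>))"
proof -
  define L where "L = l powr \<beta>"
  define x where "x = t * L"
  have L0: "L > 0" using l0 by (simp add: L_def)
  have x0: "x > 0" using L0 t0 by (simp add: x_def)
  have b1: "b \<ge> 1" using b0 g0 by (simp add: b_def)
  have K0: "K > 0" by (simp add: K_def)
  have lb: "l powr (\<beta>+\<gamma>) = L powr b"
    using b0 l0 by (simp add: L_def powr_powr b_def algebra_simps)
  define E where "E = exp (2*x)"
  have E1: "E > 1" using x0 by (simp add: E_def)
  have eE: "exp (-2*t*l powr \<beta>) = 1/E" by (simp add: E_def x_def L_def exp_minus field_simps)
  have ex: "exp (- t * l powr \<beta>) = exp (-x)" by (simp add: x_def L_def)
  define Q where "Q = 1/2 * l powr (-(\<beta>+\<gamma>)) * (1 - exp (-2*t*l powr \<beta>))"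
  have Qeq: "Q = (E - 1) / (2 * E * L powr b)"
    unfolding Q_def powr_minus lb eE using E1 L0 by (simp add: field_simps)
  have Q0: "Q > 0" using E1 L0 by (simp add: Qeq)
  define d where "d = Q powr (-1/2) * exp (-x)"
  have d0: "d \<ge> 0" by (simp add: d_def)
  have "d = exp (-x) / sqrt Q" using Q0 by (simp add: d_def powr_minus powr_half_sqrt[symmetric] field_simps)
  then have "d\<^sup>2 = exp (-x)^2 / Q" using Q0 by (simp add: power_divide)
  also have "exp (-x)^2 = 1/E"
  proof -
    have "exp (-x)^2 = exp (-x + -x)" unfolding power2_eq_square exp_add by (rule refl)
    also have "\<dots> = 1/E" by (simp add: E_def exp_minus divide_inverse)
    finally show ?thesis .
  qed
  finally have d2: "d\<^sup>2 = 2 * L powr b / (E - 1)" using E1 L0 by (simp add: Qeq field_simps)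
  have Lx: "L powr b = x powr b / t powr b"
    using t0 L0 by (simp add: x_def powr_mult)
  have xb: "x powr b \<le> K * (E - 1)" using xb_bound[OF x0 b1] by (simp add: K_def E_def)
  have "d\<^sup>2 \<le> 2 * K * t powr (-b)"
  proof -
    have "d\<^sup>2 = 2 * x powr b / (t powr b * (E - 1))" using d2 Lx by simp
    also have "\<dots> \<le> 2 * (K * (E - 1)) / (t powr b * (E - 1))"
      using xb E1 t0 by (intro divide_right_mono mult_left_mono) auto
    also have "\<dots> = 2 * K * t powr (-b)" using E1 t0 by (simp add: powr_minus field_simps)
    finally show ?thesis .
  qed
  also have "\<dots> = (sqrt (2*K) * t powr (-1/2 - \<gamma>/(2*\<beta>)))\<^sup>2"
  proof -
    have "(t powr (-1/2 - \<gamma>/(2*\<beta>)))\<^sup>2 = t powr (2 * (-1/2 - \<gamma>/(2*\<beta>)))"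
      using t0 by (simp add: powr_realpow[symmetric] powr_powr[symmetric] power2_eq_square powr_add[symmetric])
    also have "2 * (-1/2 - \<gamma>/(2*\<beta>)) = -b" using b0 by (simp add: b_def field_simps)
    finally show ?thesis using K0 by (simp add: power_mult_distrib)
  qed
  finally have "d \<le> sqrt (2*K) * t powr (-1/2 - \<gamma>/(2*\<beta>))"
    by (rule power2_le_imp_le) (use K0 in simp)
  then show ?thesis using d0 unfolding d_def Q_def ex by simp
qed




lemma summable_lam_powr:
  fixes lam :: "nat \<Rightarrow> real"
  assumes lam_pos: "\<And>k. lam k > 0" and c1: "c1 > 0"
    and lb: "\<And>k. c1 * (real k + 1) powr (2 / real m) \<le> lam k" and m: "m > 0"
    and q: "2 * q > real m"
  shows "summable (\<lambda>k. lam k powr (-q))"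
proof -
  have q0: "q > 0" using q m by simp
  have r: "-(2*q/real m) < -1" using q m by (simp add: field_simps)
  have s0: "summable (\<lambda>k. real k powr (-(2*q/real m)))" using summable_real_powr_iff r by blast
  have s1: "summable (\<lambda>k. (real k + 1) powr (-(2*q/real m)))"
    using summable_iff_shift[of "\<lambda>k. real k powr (-(2*q/real m))" 1] s0 by (simp add: add.commute)
  have s2: "summable (\<lambda>k. c1 powr (-q) * (real k + 1) powr (-(2*q/real m)))"
    by (rule summable_mult[OF s1])
  show ?thesis
  proof (rule summable_comparison_test[OF _ s2], intro exI allI impI)
    fix k :: nat
    have "lam k powr (-q) \<le> (c1 * (real k + 1) powr (2 / real m)) powr (-q)"
      using lb[of k] c1 q0 by (intro powr_mono2') auto
    also have "\<dots> = c1 powr (-q) * (real k + 1) powr (-(2*q/real m))"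
      using c1 by (simp add: powr_mult powr_powr)
    finally show "norm (lam k powr (-q)) \<le> c1 powr (-q) * (real k + 1) powr (-(2*q/real m))"
      by simp
  qed
qed

lemma trace_int:
  fixes lam :: "nat \<Rightarrow> real" and \<beta> \<gamma> :: real
  assumes lam_pos: "\<And>k. lam k > 0" and c1: "c1 > 0"
    and lb: "\<And>k. c1 * (real k + 1) powr (2 / real m) \<le> lam k" and m: "m > 0"
    and \<beta>: "\<beta> \<ge> 0" and \<gamma>: "\<gamma> \<ge> 0" and cond: "real m - 2 * \<gamma> < 2 * \<beta>"
  shows "\<exists>\<eta>>0. \<eta> < 1 \<and> (\<forall>t>0. (\<integral>\<^sup>+ s\<in>{0<..t}. ennreal (s powr (-\<eta>)) *
      (\<Sum>k. ennreal (exp (-(2 * s) * lam k powr \<beta>) * lam k powr (-\<gamma>))) \<partial>lborel) < \<infinity>)"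
proof -
  obtain p where p0: "0 < p" and p1: "p < 1" and pc: "real m - 2*\<gamma> < 2*\<beta>*p"
  proof (cases "\<beta> = 0")
    case True
    then show ?thesis using that[of "1/2"] cond by simp
  next
    case False
    then have bp: "\<beta> > 0" using \<beta> by simp
    define r where "r = (real m - 2*\<gamma>) / (2*\<beta>)"
    have r1: "r < 1" using cond bp by (simp add: r_def field_simps)
    define p where "p = max (1/2) ((1 + r)/2)"
    have a1: "(1+r)/2 \<le> p" unfolding p_def by (rule max.cobounded2)
    have a2: "r < (1+r)/2" using r1 by simp
    have rp: "r < p" using a2 a1 by (rule less_le_trans)
    have a3: "2*\<beta>*r < 2*\<beta>*p" using rp bp by simp
    have a4: "2*\<beta>*r = real m - 2*\<gamma>" using bp by (simp add: r_def)
    have a5: "0 < p" "p < 1" using r1 by (auto simp: p_def)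
    from a3 a4 a5 show ?thesis using that[of p] by simp
  qed
  define q where "q = \<gamma> + \<beta> * p"
  have sq: "summable (\<lambda>k. lam k powr (-q))"
    by (rule summable_lam_powr[OF lam_pos c1 lb m]) (use pc in \<open>simp add: q_def\<close>)
  define S where "S = (\<Sum>k. lam k powr (-q))"
  have S0: "S \<ge> 0" using sq by (simp add: S_def suminf_nonneg)
  define \<eta> where "\<eta> = (1 - p)/2"
  have pt: "\<eta> + p < 1" using p1 by (simp add: \<eta>_def field_simps)
  have key: "(\<Sum>k. ennreal (exp (-(2 * s) * lam k powr \<beta>) * lam k powr (-\<gamma>)))
      \<le> ennreal ((2 * s) powr (-p) * S)" if s0: "s > 0" for s
  proof -
    have le: "exp (-(2 * s) * lam k powr \<beta>) * lam k powr (-\<gamma>) \<le> (2 * s) powr (-p) * lam k powr (-q)" for k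
    proof -
      have lp: "lam k powr \<beta> > 0" using lam_pos[of k] by simp
      have "exp (-(2 * s) * lam k powr \<beta>) = exp (- ((2 * s) * lam k powr \<beta>))" by simp
      also have "\<dots> \<le> ((2 * s) * lam k powr \<beta>) powr (-p)"
        using s0 lp p0 p1 by (intro exp_neg_le_powr) auto
      also have "\<dots> = (2 * s) powr (-p) * lam k powr (-(\<beta>*p))"
        using s0 lam_pos[of k] by (simp add: powr_mult powr_powr)
      finally have "exp (-(2 * s) * lam k powr \<beta>) * lam k powr (-\<gamma>)
          \<le> (2 * s) powr (-p) * lam k powr (-(\<beta>*p)) * lam k powr (-\<gamma>)"
        by (intro mult_right_mono) auto
      also have "\<dots> = (2 * s) powr (-p) * lam k powr (-q)"
        using lam_pos[of k] by (simp add: q_def powr_add[symmetric] algebra_simps)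
      finally show ?thesis .
    qed
    have "(\<Sum>k. ennreal (exp (-(2 * s) * lam k powr \<beta>) * lam k powr (-\<gamma>)))
        \<le> (\<Sum>k. ennreal ((2 * s) powr (-p) * lam k powr (-q)))"
      by (intro suminf_le summableI ennreal_leI le)
    also have "\<dots> = ennreal (\<Sum>k. (2 * s) powr (-p) * lam k powr (-q))"
      by (rule suminf_ennreal2) (auto intro: summable_mult sq)
    also have "(\<Sum>k. (2 * s) powr (-p) * lam k powr (-q)) = (2 * s) powr (-p) * S"
      using sq by (simp add: S_def suminf_mult)
    finally show ?thesis .
  qed
  have fin: "(\<integral>\<^sup>+ s\<in>{0<..t}. ennreal (s powr (-\<eta>)) *
      (\<Sum>k. ennreal (exp (-(2 * s) * lam k powr \<beta>) * lam k powr (-\<gamma>))) \<partial>lborel) < \<infinity>" if t0: "t > 0" for t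
  proof -
    have "(\<integral>\<^sup>+ s\<in>{0<..t}. ennreal (s powr (-\<eta>)) *
      (\<Sum>k. ennreal (exp (-(2 * s) * lam k powr \<beta>) * lam k powr (-\<gamma>))) \<partial>lborel)
      \<le> (\<integral>\<^sup>+ s\<in>{0<..t}. ennreal ((2 powr (-p) * S) * s powr (-(\<eta>+p))) \<partial>lborel)"
    proof (intro nn_integral_mono)
      fix s :: real
      show "ennreal (s powr (-\<eta>)) * (\<Sum>k. ennreal (exp (-(2 * s) * lam k powr \<beta>) * lam k powr (-\<gamma>))) * indicator {0<..t} s
          \<le> ennreal ((2 powr (-p) * S) * s powr (-(\<eta>+p))) * indicator {0<..t} s"
      proof (cases "s \<in> {0<..t}")
        case True
        then have s0: "s > 0" by simp
        have "ennreal (s powr (-\<eta>)) * (\<Sum>k. ennreal (exp (-(2 * s) * lam k powr \<beta>) * lam k powr (-\<gamma>)))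
            \<le> ennreal (s powr (-\<eta>)) * ennreal ((2 * s) powr (-p) * S)"
          by (intro mult_left_mono key s0) simp
        also have "\<dots> = ennreal (s powr (-\<eta>) * ((2 * s) powr (-p) * S))"
          by (simp add: ennreal_mult' S0)
        also have "s powr (-\<eta>) * ((2 * s) powr (-p) * S) = (2 powr (-p) * S) * s powr (-(\<eta>+p))"
        proof -
          have e1: "s powr (-(\<eta>+p)) = s powr (-\<eta>) * s powr (-p)"
            using s0 by (simp add: powr_add[symmetric])
          have e2: "(2 * s) powr (-p) = 2 powr (-p) * s powr (-p)"
            using s0 by (simp add: powr_mult)
          show ?thesis unfolding e1 e2 by (simp add: algebra_simps)
        qed
        finally show ?thesis using True by simp
      qed simp
    qed
    also have "\<dots> < \<infinity>" by (rule powr_int_finite) (use pt t0 S0 in auto)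
    finally show ?thesis .
  qed
  show ?thesis
    by (rule exI[of _ \<eta>]) (use p0 p1 fin in \<open>auto simp: \<eta>_def\<close>)
qed




lemma exp_has_integral:
  fixes L t :: real
  assumes L0: "L > 0" and t0: "t \<ge> 0"
  shows "((\<lambda>s. exp (- (2 * L) * s)) has_integral ((1 - exp (- (2 * L) * t)) / (2 * L))) {0..t}"
proof -
  define F where "F = (\<lambda>s::real. - exp (- (2 * L) * s) / (2 * L))"
  have "((\<lambda>s. exp (- (2 * L) * s)) has_integral (F t - F 0)) {0..t}"
  proof (rule fundamental_theorem_of_calculus[OF t0])
    fix x :: real assume "x \<in> {0..t}"
    have "(F has_real_derivative exp (- (2 * L) * x)) (at x within {0..t})"
      unfolding F_def using L0 by (auto intro!: derivative_eq_intros simp: field_simps)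
    then show "(F has_vector_derivative exp (- (2 * L) * x)) (at x within {0..t})"
      by (simp add: has_real_derivative_iff_has_vector_derivative)
  qed
  also have "F t - F 0 = (1 - exp (- (2 * L) * t)) / (2 * L)"
    using L0 by (simp add: F_def field_simps)
  finally show ?thesis .
qed

lemma exp_sq: fixes s L a b c :: real shows "exp (- s * L) * (a * (b * (exp (- s * L) * c))) = a * b * c * exp (- (2 * L) * s)"
proof -
  have "exp (- s * L) * exp (- s * L) = exp (- (2 * L) * s)"
    unfolding exp_add[symmetric] by (simp add: algebra_simps)
  then show ?thesis by (metis (no_types, lifting) mult.assoc mult.commute)
qed

lemma Qtn_coord:
  assumes lk: "lam k > 0" and t0: "t \<ge> 0"
  shows "Qtn lam \<beta> \<gamma> n t x k =
    (if k < n then lam k powr (-\<gamma>) * x k * ((1 - exp (- (2 * lam k powr \<beta>) * t)) / (2 * lam k powr \<beta>)) else 0)"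
proof -
  define L where "L = lam k powr \<beta>"
  have L0: "L > 0" using lk by (simp add: L_def)
  have pg: "lam k powr (-\<gamma>/2) * lam k powr (-\<gamma>/2) = lam k powr (-\<gamma>)"
    using lk by (simp add: powr_add[symmetric])
  have int: "(\<lambda>s. (semigrp_n lam \<beta> n s \<circ> opGn lam \<gamma> n \<circ> opGn_adj lam \<gamma> n \<circ> semigrp_n lam \<beta> n s) x k)
      = (\<lambda>s. (if k < n then lam k powr (-\<gamma>) * x k else 0) * exp (- (2 * L) * s))"
  proof
    fix s
    show "(semigrp_n lam \<beta> n s \<circ> opGn lam \<gamma> n \<circ> opGn_adj lam \<gamma> n \<circ> semigrp_n lam \<beta> n s) x k
      = (if k < n then lam k powr (-\<gamma>) * x k else 0) * exp (- (2 * L) * s)"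
    proof (cases "k < n")
      case True
      then have "(semigrp_n lam \<beta> n s \<circ> opGn lam \<gamma> n \<circ> opGn_adj lam \<gamma> n \<circ> semigrp_n lam \<beta> n s) x k
         = exp (- s * L) * (lam k powr (-\<gamma>/2) * (lam k powr (-\<gamma>/2) * (exp (- s * L) * x k)))"
        by (simp add: semigrp_n_def opGn_def opGn_adj_def opG_def negLapPow_def proj_def diag_def L_def)
      also have "\<dots> = lam k powr (-\<gamma>/2) * lam k powr (-\<gamma>/2) * x k * exp (- (2 * L) * s)"
        by (rule exp_sq)
      also have "\<dots> = lam k powr (-\<gamma>) * x k * exp (- (2 * L) * s)" unfolding pg ..
      finally show ?thesis using True by simp
    next
      case False
      then show ?thesis
        by (simp add: semigrp_n_def opGn_def opGn_adj_def opG_def negLapPow_def proj_def diag_def)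
    qed
  qed
  have "integral {0..t} (\<lambda>s. (if k < n then lam k powr (-\<gamma>) * x k else 0) * exp (- (2 * L) * s))
     = (if k < n then lam k powr (-\<gamma>) * x k else 0) * ((1 - exp (- (2 * L) * t)) / (2 * L))"
    using exp_has_integral[OF L0 t0] by (intro integral_unique has_integral_mult_right)
  then show ?thesis unfolding Qtn_def int by (simp add: L_def)
qed

lemma Qtn_unit:
  assumes lk: "lam k > 0" and t0: "t \<ge> 0" and kn: "k < n"
  shows "Qtn lam \<beta> \<gamma> n t (unitvec k) k = Qsymb lam \<beta> \<gamma> t k"
proof -
  have e: "lam k powr (-(\<beta>+\<gamma>)) = lam k powr (-\<gamma>) / lam k powr \<beta>"
  proof -
    have "lam k powr (-(\<beta>+\<gamma>)) = lam k powr (-\<gamma> + -\<beta>)" by (simp add: algebra_simps)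
    also have "\<dots> = lam k powr (-\<gamma>) * lam k powr (-\<beta>)" by (rule powr_add)
    also have "\<dots> = lam k powr (-\<gamma>) / lam k powr \<beta>" by (simp add: powr_minus divide_inverse)
    finally show ?thesis .
  qed
  have "Qtn lam \<beta> \<gamma> n t (unitvec k) k = lam k powr (-\<gamma>) * ((1 - exp (- (2 * lam k powr \<beta>) * t)) / (2 * lam k powr \<beta>))"
    using Qtn_coord[of lam k t, OF lk t0] kn by (simp add: unitvec_def)
  also have "\<dots> = Qsymb lam \<beta> \<gamma> t k"
    unfolding Qsymb_def e by (simp add: algebra_simps)
  finally show ?thesis .
qed

lemma ennpowr_le:
  assumes "X \<le> ennreal Y" "Y \<ge> 0" "p > 0"
  shows "ennpowr X p \<le> ennreal (Y powr p)"
proof -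
  have nt: "X \<noteq> top" using assms(1) by (auto simp: top_unique)
  have "enn2real X \<le> enn2real (ennreal Y)" using assms(1) by (rule enn2real_mono) simp
  then have le: "enn2real X \<le> Y" using assms(2) by simp
  have "enn2real X powr p \<le> Y powr p" using le assms(3) by (intro powr_mono2) auto
  then show ?thesis using nt by (simp add: ennpowr_def ennreal_leI)
qed



lemma trace_eq1: "traceE (semigrp lam \<beta> (2 * s) \<circ> negLapPow lam (-\<gamma>)) =
   (\<Sum>k. ennreal (exp (- (2 * s) * lam k powr \<beta>) * lam k powr (-\<gamma>)))"
  by (simp add: traceE_def semigrp_def negLapPow_def diag_def unitvec_def)

lemma trace_eq2: "traceE (semigrp lam \<beta> s \<circ> opG lam \<gamma> \<circ> opG lam \<gamma> \<circ> semigrp lam \<beta> s) =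
   (\<Sum>k. ennreal (exp (- (2 * s) * lam k powr \<beta>) * lam k powr (-\<gamma>)))"
  if "\<And>k. lam k > 0" for lam :: "nat \<Rightarrow> real"
proof -
  have "(semigrp lam \<beta> s \<circ> opG lam \<gamma> \<circ> opG lam \<gamma> \<circ> semigrp lam \<beta> s) (unitvec k) k
     = exp (- (2 * s) * lam k powr \<beta>) * lam k powr (-\<gamma>)" for k
  proof -
    have pg: "lam k powr (-\<gamma>/2) * lam k powr (-\<gamma>/2) = lam k powr (-\<gamma>)"
      using that[of k] by (simp add: powr_add[symmetric])
    have "(semigrp lam \<beta> s \<circ> opG lam \<gamma> \<circ> opG lam \<gamma> \<circ> semigrp lam \<beta> s) (unitvec k) k
      = exp (- s * lam k powr \<beta>) * (lam k powr (-\<gamma>/2) * (lam k powr (-\<gamma>/2) * (exp (- s * lam k powr \<beta>) * 1)))"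
      by (simp add: semigrp_def opG_def negLapPow_def diag_def unitvec_def)
    also have "\<dots> = lam k powr (-\<gamma>/2) * lam k powr (-\<gamma>/2) * 1 * exp (- (2 * lam k powr \<beta>) * s)"
      by (rule exp_sq)
    also have "\<dots> = lam k powr (-\<gamma>) * 1 * exp (- (2 * lam k powr \<beta>) * s)" unfolding pg ..
    finally show ?thesis by (simp add: algebra_simps)
  qed
  then show ?thesis by (simp add: traceE_def)
qed

lemma Hn_ell2:
  assumes "\<And>k. k \<ge> n \<Longrightarrow> x k = 0" shows "x \<in> ell2"
proof -
  have "summable (\<lambda>k. (x k)\<^sup>2)"
    by (rule summable_finite[of "{..<n}"]) (auto simp: not_less assms)
  then show ?thesis by (simp add: ell2_def)
qed

lemma density:
  assumes x: "x \<in> ell2" and e: "\<epsilon> > 0"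
  shows "\<exists>n. \<exists>y\<in>Hn n. l2norm (\<lambda>k. x k - y k) < \<epsilon>"
proof -
  define f where "f = (\<lambda>k. (x k)\<^sup>2)"
  have sf: "summable f" using x by (simp add: ell2_def f_def)
  have "(\<lambda>n. (\<Sum>k. f k) - (\<Sum>i<n. f i)) \<longlonglongrightarrow> (\<Sum>k. f k) - (\<Sum>k. f k)"
    by (intro tendsto_diff tendsto_const summable_LIMSEQ sf)
  then have "(\<lambda>n. \<Sum>k. f (k + n)) \<longlonglongrightarrow> 0"
    using suminf_minus_initial_segment[OF sf] by simp
  then have "eventually (\<lambda>n. (\<Sum>k. f (k + n)) < \<epsilon>\<^sup>2) sequentially"
    using e by (intro order_tendstoD(2)) auto
  then obtain n where n: "(\<Sum>k. f (k + n)) < \<epsilon>\<^sup>2" by (auto simp: eventually_sequentially)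
  define y where "y = proj n x"
  have yH: "y \<in> Hn n" unfolding Hn_def y_def proj_def by (auto intro!: Hn_ell2[of n])
  define g where "g = (\<lambda>k. (x k - y k)\<^sup>2)"
  have gi: "g = (\<lambda>k. if k < n then 0 else f k)" by (auto simp: g_def f_def y_def proj_def)
  have sg: "summable g" unfolding gi
    by (rule summable_comparison_test[OF _ sf]) (auto simp: f_def)
  have "(\<Sum>k. g k) = (\<Sum>k. g (k + n)) + (\<Sum>i<n. g i)" by (rule suminf_split_initial_segment[OF sg])
  also have "(\<Sum>i<n. g i) = 0" by (simp add: gi)
  also have "(\<lambda>k. g (k + n)) = (\<lambda>k. f (k + n))" by (simp add: gi)
  finally have "(\<Sum>k. g k) < \<epsilon>\<^sup>2" using n by simp
  then have "sqrt (\<Sum>k. g k) < sqrt (\<epsilon>\<^sup>2)" by (rule real_sqrt_less_mono)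
  then have "l2norm (\<lambda>k. x k - y k) < \<epsilon>" using e by (simp add: l2norm_def g_def)
  then show ?thesis using yH by blast
qed


theorem proposition5p13:
  fixes lam :: "nat \<Rightarrow> real" and m :: nat and \<beta> \<gamma> \<theta> :: real
  assumes m: "m \<in> {1, 2, 3}"
    and lam_pos: "\<And>k. lam k > 0"
    and lam_asymp: "\<exists>c1 c2. c1 > 0 \<and> c2 > 0 \<and>
        (\<forall>k. c1 * (real k + 1) powr (2 / real m) \<le> lam k \<and> lam k \<le> c2 * (real k + 1) powr (2 / real m))"
    and \<beta>: "\<beta> \<ge> 0" and \<gamma>: "\<gamma> \<ge> 0" and \<theta>: "0 < \<theta>" "\<theta> < 1"
  shows
    "(real m - 2 * \<gamma> < 2 * \<beta> \<longrightarrow>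
       (\<exists>\<eta>>0. \<forall>t>0. (\<integral>\<^sup>+ s\<in>{0<..t}. ennreal (s powr (-\<eta>)) *
           traceE (semigrp lam \<beta> (2 * s) \<circ> negLapPow lam (-\<gamma>)) \<partial>lborel) < \<infinity>))
   \<and> (\<beta> > 0 \<longrightarrow>
       (\<exists>c>0. \<forall>n t. t > 0 \<longrightarrow>
          opnorm (proj n \<circ> Qt_invsqrt lam \<beta> \<gamma> t \<circ> semigrp lam \<beta> t \<circ> proj n)
            \<le> opnorm (Qt_invsqrt lam \<beta> \<gamma> t \<circ> semigrp lam \<beta> t)
        \<and> opnorm (Qt_invsqrt lam \<beta> \<gamma> t \<circ> semigrp lam \<beta> t)
            \<le> ennreal (c * t powr (-1/2 - \<gamma> / (2 * \<beta>)))))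
   \<and> ((real m - 2 * \<beta>) / 2 < \<gamma> \<and> \<gamma> < \<beta> * \<theta> / (2 - \<theta>) \<longrightarrow>
       (\<exists>\<eta>. 0 < \<eta> \<and> \<eta> < 1 \<and> (\<forall>t>0. (\<integral>\<^sup>+ s\<in>{0<..t}. ennreal (s powr (-\<eta>)) *
           traceE (semigrp lam \<beta> s \<circ> opG lam \<gamma> \<circ> opG lam \<gamma> \<circ> semigrp lam \<beta> s) \<partial>lborel) < \<infinity>))
     \<and> (\<forall>n. Hn n \<subseteq> domA lam \<beta>)
     \<and> (\<forall>n. Hn n \<subseteq> Hn (Suc n))
     \<and> (\<forall>x\<in>ell2. \<forall>\<epsilon>>0. \<exists>n. \<exists>y\<in>Hn n. l2norm (\<lambda>k. x k - y k) < \<epsilon>)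
     \<and> (\<forall>n. opA lam \<beta> ` (Hn (Suc n) - Hn n) \<subseteq> (Hn (Suc n) - Hn n) \<union> {\<lambda>k. 0})
     \<and> (\<forall>t>0. \<forall>n. \<forall>x\<in>Hn n. Qtn lam \<beta> \<gamma> n t x = (\<lambda>k. 0) \<longrightarrow> x = (\<lambda>k. 0))
     \<and> (\<forall>t>0. (SUP n. \<integral>\<^sup>+ s\<in>{0<..t}.
           ennpowr (opnorm (Qtn_invsqrt lam \<beta> \<gamma> n s \<circ> semigrp_n lam \<beta> n s)) (2 - \<theta>) \<partial>lborel) < \<infinity>))"
proof -
  obtain c1 c2 where c1: "c1 > 0" and lb: "\<And>k. c1 * (real k + 1) powr (2 / real m) \<le> lam k"
    using lam_asymp by blast
  have m0: "m > 0" using m by auto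
  have P1: "real m - 2 * \<gamma> < 2 * \<beta> \<longrightarrow>
       (\<exists>\<eta>>0. \<forall>t>0. (\<integral>\<^sup>+ s\<in>{0<..t}. ennreal (s powr (-\<eta>)) *
           traceE (semigrp lam \<beta> (2 * s) \<circ> negLapPow lam (-\<gamma>)) \<partial>lborel) < \<infinity>)"
  proof
    assume "real m - 2 * \<gamma> < 2 * \<beta>"
    from trace_int[OF lam_pos c1 lb m0 \<beta> \<gamma> this] show "\<exists>\<eta>>0. \<forall>t>0. (\<integral>\<^sup>+ s\<in>{0<..t}. ennreal (s powr (-\<eta>)) *
           traceE (semigrp lam \<beta> (2 * s) \<circ> negLapPow lam (-\<gamma>)) \<partial>lborel) < \<infinity>"
      unfolding trace_eq1 by blast
  qed
  define C where "C = (\<lambda>\<beta>::real. sqrt (2 * max (1/2) (2 * (2 * (1 + \<gamma>/\<beta>)) powr (1 + \<gamma>/\<beta>))))"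
  have C0: "C b > 0" for b by (simp add: C_def)
  have symb: "\<bar>Qsymb lam \<beta> \<gamma> t k powr (-1/2) * exp (- t * lam k powr \<beta>)\<bar> \<le> C \<beta> * t powr (-1/2 - \<gamma>/(2 * \<beta>))"
    if "\<beta> > 0" "t > 0" for t k
    unfolding Qsymb_def C_def using sym_bound[OF that(1) \<gamma> lam_pos[of k] that(2)] by simp
  have P2: "\<beta> > 0 \<longrightarrow>
       (\<exists>c>0. \<forall>n t. t > 0 \<longrightarrow>
          opnorm (proj n \<circ> Qt_invsqrt lam \<beta> \<gamma> t \<circ> semigrp lam \<beta> t \<circ> proj n)
            \<le> opnorm (Qt_invsqrt lam \<beta> \<gamma> t \<circ> semigrp lam \<beta> t)
        \<and> opnorm (Qt_invsqrt lam \<beta> \<gamma> t \<circ> semigrp lam \<beta> t)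
            \<le> ennreal (c * t powr (-1/2 - \<gamma> / (2 * \<beta>))))"
  proof
    assume b0: "\<beta> > 0"
    show "\<exists>c>0. \<forall>n t. t > 0 \<longrightarrow>
          opnorm (proj n \<circ> Qt_invsqrt lam \<beta> \<gamma> t \<circ> semigrp lam \<beta> t \<circ> proj n)
            \<le> opnorm (Qt_invsqrt lam \<beta> \<gamma> t \<circ> semigrp lam \<beta> t)
        \<and> opnorm (Qt_invsqrt lam \<beta> \<gamma> t \<circ> semigrp lam \<beta> t)
            \<le> ennreal (c * t powr (-1/2 - \<gamma> / (2 * \<beta>)))"
    proof (rule exI[of _ "C \<beta>"], intro conjI allI impI C0)
      fix n :: nat and t :: real assume t0: "t > 0"
      show "opnorm (proj n \<circ> Qt_invsqrt lam \<beta> \<gamma> t \<circ> semigrp lam \<beta> t \<circ> proj n)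
            \<le> opnorm (Qt_invsqrt lam \<beta> \<gamma> t \<circ> semigrp lam \<beta> t)"
        using opnorm_proj_le[of n "Qt_invsqrt lam \<beta> \<gamma> t \<circ> semigrp lam \<beta> t"] by (simp add: o_assoc)
      show "opnorm (Qt_invsqrt lam \<beta> \<gamma> t \<circ> semigrp lam \<beta> t)
            \<le> ennreal (C \<beta> * t powr (-1/2 - \<gamma> / (2 * \<beta>)))"
        unfolding Qt_invsqrt_def semigrp_def diag_comp
        by (rule opnorm_diag_le[OF _ symb[OF b0 t0]]) (use C0[of \<beta>] in simp)
    qed
  qed
  have P3: "(real m - 2 * \<beta>) / 2 < \<gamma> \<and> \<gamma> < \<beta> * \<theta> / (2 - \<theta>) \<longrightarrow>
       (\<exists>\<eta>. 0 < \<eta> \<and> \<eta> < 1 \<and> (\<forall>t>0. (\<integral>\<^sup>+ s\<in>{0<..t}. ennreal (s powr (-\<eta>)) *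
           traceE (semigrp lam \<beta> s \<circ> opG lam \<gamma> \<circ> opG lam \<gamma> \<circ> semigrp lam \<beta> s) \<partial>lborel) < \<infinity>))
     \<and> (\<forall>n. Hn n \<subseteq> domA lam \<beta>)
     \<and> (\<forall>n. Hn n \<subseteq> Hn (Suc n))
     \<and> (\<forall>x\<in>ell2. \<forall>\<epsilon>>0. \<exists>n. \<exists>y\<in>Hn n. l2norm (\<lambda>k. x k - y k) < \<epsilon>)
     \<and> (\<forall>n. opA lam \<beta> ` (Hn (Suc n) - Hn n) \<subseteq> (Hn (Suc n) - Hn n) \<union> {\<lambda>k. 0})
     \<and> (\<forall>t>0. \<forall>n. \<forall>x\<in>Hn n. Qtn lam \<beta> \<gamma> n t x = (\<lambda>k. 0) \<longrightarrow> x = (\<lambda>k. 0))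
     \<and> (\<forall>t>0. (SUP n. \<integral>\<^sup>+ s\<in>{0<..t}.
           ennpowr (opnorm (Qtn_invsqrt lam \<beta> \<gamma> n s \<circ> semigrp_n lam \<beta> n s)) (2 - \<theta>) \<partial>lborel) < \<infinity>)"
  proof (intro impI)
    assume H: "(real m - 2 * \<beta>) / 2 < \<gamma> \<and> \<gamma> < \<beta> * \<theta> / (2 - \<theta>)"
    have th2: "2 - \<theta> > 0" using \<theta> by simp
    have g1: "\<gamma> * (2 - \<theta>) < \<beta> * \<theta>" using H th2 by (simp add: field_simps)
    have b0: "\<beta> > 0"
    proof (rule ccontr)
      assume "\<not> \<beta> > 0"
      then have "\<beta> * \<theta> \<le> 0" using \<beta> \<theta> by (simp add: mult_nonpos_nonneg)
      moreover have "\<gamma> * (2 - \<theta>) \<ge> 0" using \<gamma> th2 by simp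
      ultimately show False using g1 by linarith
    qed
    have cond: "real m - 2 * \<gamma> < 2 * \<beta>" using H by simp
    have A1: "\<exists>\<eta>. 0 < \<eta> \<and> \<eta> < 1 \<and> (\<forall>t>0. (\<integral>\<^sup>+ s\<in>{0<..t}. ennreal (s powr (-\<eta>)) *
           traceE (semigrp lam \<beta> s \<circ> opG lam \<gamma> \<circ> opG lam \<gamma> \<circ> semigrp lam \<beta> s) \<partial>lborel) < \<infinity>)"
      using trace_int[OF lam_pos c1 lb m0 \<beta> \<gamma> cond] unfolding trace_eq2[OF lam_pos] by blast
    have A2: "\<forall>n. Hn n \<subseteq> domA lam \<beta>"
    proof (intro allI subsetI)
      fix n x assume x: "x \<in> Hn n"
      then have "opA lam \<beta> x \<in> ell2" by (intro Hn_ell2[of n]) (auto simp: Hn_def opA_def diag_def)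
      then show "x \<in> domA lam \<beta>" using x by (simp add: domA_def Hn_def)
    qed
    have A3: "\<forall>n. Hn n \<subseteq> Hn (Suc n)" by (auto simp: Hn_def)
    have A4: "\<forall>x\<in>ell2. \<forall>\<epsilon>>0. \<exists>n. \<exists>y\<in>Hn n. l2norm (\<lambda>k. x k - y k) < \<epsilon>"
      using density by blast
    have A5: "\<forall>n. opA lam \<beta> ` (Hn (Suc n) - Hn n) \<subseteq> (Hn (Suc n) - Hn n) \<union> {\<lambda>k. 0}"
    proof (intro allI subsetI)
      fix n z assume "z \<in> opA lam \<beta> ` (Hn (Suc n) - Hn n)"
      then obtain x where x1: "x \<in> Hn (Suc n)" and x2: "x \<notin> Hn n" and z: "z = opA lam \<beta> x" by auto
      have zk: "z k = - (lam k powr \<beta>) * x k" for k by (simp add: z opA_def diag_def)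
      have xe: "x \<in> ell2" using x1 by (simp add: Hn_def)
      obtain k where k: "k \<ge> n" "x k \<noteq> 0" using x2 xe by (auto simp: Hn_def)
      have "z \<in> ell2" by (rule Hn_ell2[of "Suc n"]) (use x1 in \<open>auto simp: zk Hn_def\<close>)
      then have "z \<in> Hn (Suc n)" using x1 by (auto simp: Hn_def zk)
      moreover have "z \<notin> Hn n" using k lam_pos[of k] by (auto simp: Hn_def zk)
      ultimately show "z \<in> (Hn (Suc n) - Hn n) \<union> {\<lambda>k. 0}" by simp
    qed
    have A6: "\<forall>t>0. \<forall>n. \<forall>x\<in>Hn n. Qtn lam \<beta> \<gamma> n t x = (\<lambda>k. 0) \<longrightarrow> x = (\<lambda>k. 0)"
    proof (intro allI impI ballI ext)
      fix t :: real and n x k assume t0: "t > 0" and x: "x \<in> Hn n" and Q: "Qtn lam \<beta> \<gamma> n t x = (\<lambda>k. 0)"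
      show "x k = 0"
      proof (cases "k < n")
        case True
        have L0: "lam k powr \<beta> > 0" using lam_pos[of k] by simp
        have "exp (- (2 * lam k powr \<beta>) * t) < 1" using L0 t0 by simp
        then have pos: "(1 - exp (- (2 * lam k powr \<beta>) * t)) / (2 * lam k powr \<beta>) > 0" using L0 by simp
        have "lam k powr (-\<gamma>) * x k * ((1 - exp (- (2 * lam k powr \<beta>) * t)) / (2 * lam k powr \<beta>)) = 0"
          using Qtn_coord[of lam k t \<beta> \<gamma> n x, OF lam_pos] t0 True Q by (metis less_imp_le)
        then show ?thesis using pos lam_pos[of k] t0 by simp
      next
        case False
        then show ?thesis using x by (simp add: Hn_def)
      qed
    qed
    have A7: "\<forall>t>0. (SUP n. \<integral>\<^sup>+ s\<in>{0<..t}.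
           ennpowr (opnorm (Qtn_invsqrt lam \<beta> \<gamma> n s \<circ> semigrp_n lam \<beta> n s)) (2 - \<theta>) \<partial>lborel) < \<infinity>"
    proof (intro allI impI)
      fix t :: real assume t0: "t > 0"
      define a where "a = 1/2 + \<gamma> / (2 * \<beta>)"
      have aq: "a * (2 - \<theta>) < 1"
      proof -
        have "a * (2 - \<theta>) = ((\<beta> + \<gamma>) * (2 - \<theta>)) / (2 * \<beta>)" using b0 by (simp add: a_def field_simps)
        also have "\<dots> < 1" using g1 b0 by (simp add: field_simps)
        finally show ?thesis .
      qed
      have ea: "-1/2 - \<gamma> / (2 * \<beta>) = - a" by (simp add: a_def)
      have bnd: "ennpowr (opnorm (Qtn_invsqrt lam \<beta> \<gamma> n s \<circ> semigrp_n lam \<beta> n s)) (2 - \<theta>)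
          \<le> ennreal (C \<beta> powr (2 - \<theta>) * s powr (- (a * (2 - \<theta>))))" if s0: "s > 0" for n s
      proof -
        have eqd: "Qtn_invsqrt lam \<beta> \<gamma> n s \<circ> semigrp_n lam \<beta> n s
            = diag (\<lambda>k. if k < n then Qsymb lam \<beta> \<gamma> s k powr (-1/2) * exp (- s * lam k powr \<beta>) else 0)"
          unfolding Qtn_invsqrt_def semigrp_n_def diag_comp
        proof (rule arg_cong[where f=diag])
          have qu: "Qtn lam \<beta> \<gamma> n s (unitvec k) k = Qsymb lam \<beta> \<gamma> s k" if "k < n" for k
            using lam_pos s0 that by (intro Qtn_unit) auto
          show "(\<lambda>k. (if k < n then Qtn lam \<beta> \<gamma> n s (unitvec k) k powr (-1/2) else 0) *
                 (if k < n then exp (- s * lam k powr \<beta>) else 1)) =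
                (\<lambda>k. if k < n then Qsymb lam \<beta> \<gamma> s k powr (-1/2) * exp (- s * lam k powr \<beta>) else 0)"
            by (auto simp: fun_eq_iff qu)
        qed
        have "opnorm (Qtn_invsqrt lam \<beta> \<gamma> n s \<circ> semigrp_n lam \<beta> n s) \<le> ennreal (C \<beta> * s powr (- a))"
          unfolding eqd
        proof (rule opnorm_diag_le)
          show "0 \<le> C \<beta> * s powr (- a)" using C0[of \<beta>] by simp
          fix k
          show "\<bar>if k < n then Qsymb lam \<beta> \<gamma> s k powr (-1/2) * exp (- s * lam k powr \<beta>) else 0\<bar> \<le> C \<beta> * s powr (- a)"
            using symb[OF b0 s0, of k] C0[of \<beta>] unfolding ea by simp
        qed
        then have "ennpowr (opnorm (Qtn_invsqrt lam \<beta> \<gamma> n s \<circ> semigrp_n lam \<beta> n s)) (2 - \<theta>)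
            \<le> ennreal ((C \<beta> * s powr (- a)) powr (2 - \<theta>))"
          by (rule ennpowr_le) (use C0[of \<beta>] th2 in auto)
        also have "(C \<beta> * s powr (- a)) powr (2 - \<theta>) = C \<beta> powr (2 - \<theta>) * s powr (- (a * (2 - \<theta>)))"
          using C0[of \<beta>] s0 by (simp add: powr_mult powr_powr)
        finally show ?thesis .
      qed
      have "(SUP n. \<integral>\<^sup>+ s\<in>{0<..t}.
           ennpowr (opnorm (Qtn_invsqrt lam \<beta> \<gamma> n s \<circ> semigrp_n lam \<beta> n s)) (2 - \<theta>) \<partial>lborel)
          \<le> (\<integral>\<^sup>+ s\<in>{0<..t}. ennreal (C \<beta> powr (2 - \<theta>) * s powr (- (a * (2 - \<theta>)))) \<partial>lborel)"
      proof (rule SUP_least, rule nn_integral_mono)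
        fix n s
        show "ennpowr (opnorm (Qtn_invsqrt lam \<beta> \<gamma> n s \<circ> semigrp_n lam \<beta> n s)) (2 - \<theta>) * indicator {0<..t} s
           \<le> ennreal (C \<beta> powr (2 - \<theta>) * s powr (- (a * (2 - \<theta>)))) * indicator {0<..t} s"
          using bnd[of s n] by (cases "s \<in> {0<..t}") auto
      qed
      also have "\<dots> < \<infinity>" by (rule powr_int_finite[OF aq t0]) simp
      finally show "(SUP n. \<integral>\<^sup>+ s\<in>{0<..t}.
           ennpowr (opnorm (Qtn_invsqrt lam \<beta> \<gamma> n s \<circ> semigrp_n lam \<beta> n s)) (2 - \<theta>) \<partial>lborel) < \<infinity>" .
    qed
    show "(\<exists>\<eta>. 0 < \<eta> \<and> \<eta> < 1 \<and> (\<forall>t>0. (\<integral>\<^sup>+ s\<in>{0<..t}. ennreal (s powr (-\<eta>)) *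
           traceE (semigrp lam \<beta> s \<circ> opG lam \<gamma> \<circ> opG lam \<gamma> \<circ> semigrp lam \<beta> s) \<partial>lborel) < \<infinity>))
     \<and> (\<forall>n. Hn n \<subseteq> domA lam \<beta>)
     \<and> (\<forall>n. Hn n \<subseteq> Hn (Suc n))
     \<and> (\<forall>x\<in>ell2. \<forall>\<epsilon>>0. \<exists>n. \<exists>y\<in>Hn n. l2norm (\<lambda>k. x k - y k) < \<epsilon>)
     \<and> (\<forall>n. opA lam \<beta> ` (Hn (Suc n) - Hn n) \<subseteq> (Hn (Suc n) - Hn n) \<union> {\<lambda>k. 0})
     \<and> (\<forall>t>0. \<forall>n. \<forall>x\<in>Hn n. Qtn lam \<beta> \<gamma> n t x = (\<lambda>k. 0) \<longrightarrow> x = (\<lambda>k. 0))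
     \<and> (\<forall>t>0. (SUP n. \<integral>\<^sup>+ s\<in>{0<..t}.
           ennpowr (opnorm (Qtn_invsqrt lam \<beta> \<gamma> n s \<circ> semigrp_n lam \<beta> n s)) (2 - \<theta>) \<partial>lborel) < \<infinity>)"
      using A1 A2 A3 A4 A5 A6 A7 by blast
  qed
  show ?thesis using P1 P2 P3 by blast
qed

end
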